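(* Let $\kappa$ be a kernel on $\mathbb{R}^d$ and $\psi$ a feature map such that, for a probability density $p$, $\kappa(\mathbf{x},\mathbf{x}')=\int\psi(\mathbf{x},\mathbf{v})\psi(\mathbf{x}',\mathbf{v})p(\mathbf{v})\,d\mathbf{v}$ for all $\mathbf{x},\mathbf{x}'$, and $\psi^2(\cdot\,;\cdot)\le b$ almost surely for some constant $b>0$. Fix points $\mathbf{x}_1,\dots,\mathbf{x}_n,\mathbf{x}'\in\mathbb{R}^d$ and let $\mathcal{V}_s=\{\mathbf{v}_1,\dots,\mathbf{v}_s\}$ be i.i.d. with density $p$. Then $$\mathbb{E}_{\mathcal{V}_s}\big[(\tilde{\mathbf{k}}'-\mathbf{k}')(\tilde{\mathbf{k}}'-\mathbf{k}')^T\big]\ \preceq\ \frac{b}{s}\mathbf{K}-\frac{1}{s}\mathbf{k}'\mathbf{k}'^T.$$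
   Context: $\boldsymbol{\psi}(\mathbf{x};\mathcal{V}_s)=\frac{1}{\sqrt{s}}[\psi(\mathbf{x};\mathbf{v}_1),\dots,\psi(\mathbf{x};\mathbf{v}_s)]^T\in\mathbb{R}^s$; $\boldsymbol{\Psi}\in\mathbb{R}^{n\times s}$ has $i$-th row $\boldsymbol{\psi}(\mathbf{x}_i;\mathcal{V}_s)^T$. $\mathbf{K}\in\mathbb{R}^{n\times n}$ has entries $K_{ij}=\kappa(\mathbf{x}_i,\mathbf{x}_j)$; $\mathbf{k}'\in\mathbb{R}^n$ has entries $k'_i=\kappa(\mathbf{x}_i,\mathbf{x}')$; $\tilde{\mathbf{k}}'=\boldsymbol{\Psi}\,\boldsymbol{\psi}(\mathbf{x}';\mathcal{V}_s)\in\mathbb{R}^n$, i.e. $\tilde k'_i=\boldsymbol{\psi}(\mathbf{x}_i;\mathcal{V}_s)^T\boldsymbol{\psi}(\mathbf{x}';\mathcal{V}_s)$. $\preceq$ is the Loewner order. *)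

theory Defs
  imports "HOL-Probability.Probability"
begin

definition loewner_le :: "real^'n^'n \<Rightarrow> real^'n^'n \<Rightarrow> bool" where
  "loewner_le A B \<longleftrightarrow> (\<forall>z::real^'n. 0 \<le> z \<bullet> ((B - A) *v z))"

definition gram_mat :: "('a \<Rightarrow> 'a \<Rightarrow> real) \<Rightarrow> ('n::finite \<Rightarrow> 'a) \<Rightarrow> real^'n^'n" where
  "gram_mat \<kappa> xs = (\<chi> i j. \<kappa> (xs i) (xs j))"

definition kvec :: "('a \<Rightarrow> 'a \<Rightarrow> real) \<Rightarrow> ('n::finite \<Rightarrow> 'a) \<Rightarrow> 'a \<Rightarrow> real^'n" where
  "kvec \<kappa> xs x' = (\<chi> i. \<kappa> (xs i) x')"

text \<open>Random-feature approximation tilde k' = Psi psi(x';V_s), for features V_0..V_(s-1):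
  tilde k'_i = (1/s) * sum_l psi(x_i, v_l) psi(x', v_l).\<close>
definition rf_kvec :: "('a \<Rightarrow> 'v \<Rightarrow> real) \<Rightarrow> nat \<Rightarrow> ('n::finite \<Rightarrow> 'a) \<Rightarrow> 'a \<Rightarrow> (nat \<Rightarrow> 'v) \<Rightarrow> real^'n" where
  "rf_kvec \<psi> s xs x' V = (\<chi> i. (\<Sum>l<s. (1 / sqrt (real s) * \<psi> (xs i) (V l)) * (1 / sqrt (real s) * \<psi> x' (V l))))"

definition outer :: "real^'n \<Rightarrow> real^'n \<Rightarrow> real^'n^'n" where
  "outer u w = (\<chi> i j. u $ i * w $ j)"

end

theory Submission
  imports Defs
begin

lemma mean_cov:
  fixes M :: "'v measure" and f g :: "'v \<Rightarrow> real" and s :: nat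
  assumes M: "prob_space M" and fi: "integrable M f" and gi: "integrable M g"
    and fgi: "integrable M (\<lambda>v. f v * g v)" and s: "s > 0"
  shows "integrable (PiM {..<s} (\<lambda>_. M))
     (\<lambda>V. ((1/real s) * (\<Sum>l<s. f (V l) - integral\<^sup>L M f)) * ((1/real s) * (\<Sum>m<s. g (V m) - integral\<^sup>L M g)))"
   and "(\<integral>V. ((1/real s) * (\<Sum>l<s. f (V l) - integral\<^sup>L M f)) * ((1/real s) * (\<Sum>m<s. g (V m) - integral\<^sup>L M g))
        \<partial>PiM {..<s} (\<lambda>_. M))
        = (1/real s) * ((\<integral>v. f v * g v \<partial>M) - integral\<^sup>L M f * integral\<^sup>L M g)"
proof -
  interpret product_prob_space "\<lambda>_. M" by (rule product_prob_spaceI) (rule M)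
  interpret prob_space M by (rule M)
  have ps: "measure M (space M) = 1" by (rule prob_space.prob_space[OF M])
  define cf where "cf = integral\<^sup>L M f"
  define cg where "cg = integral\<^sup>L M g"
  define F where "F l m i v = (if i = l then f v - cf else 1) * (if i = m then g v - cg else 1)"
    for l m i :: nat and v
  have Fint: "integrable M (F l m i)" for l m i
  proof -
    have e: "(\<lambda>v. (f v - cf) * (g v - cg)) = (\<lambda>v. f v * g v - cg * f v - cf * g v + cf * cg)"
      by (auto simp: algebra_simps)
    have "integrable M (\<lambda>v. (f v - cf) * (g v - cg))"
      unfolding e using fi gi fgi by auto
    then show ?thesis unfolding F_def using fi gi
      by (cases "i = l"; cases "i = m") auto
  qed
  have Fprod: "(\<Prod>i<s. F l m i (V i)) = (f (V l) - cf) * (g (V m) - cg)" if "l < s" "m < s" for l m V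
    unfolding F_def prod.distrib using that by (simp add: prod.delta)
  have Fintg: "integral\<^sup>L M (F l m i) = (if i = l \<and> i = m then (\<integral>v. f v * g v \<partial>M) - cf * cg
     else if i = l \<or> i = m then 0 else 1)" for l m i
  proof -
    have "integral\<^sup>L M (\<lambda>v. (f v - cf) * (g v - cg)) = (\<integral>v. f v * g v \<partial>M) - cf * cg"
    proof -
      have "(\<lambda>v. (f v - cf) * (g v - cg)) = (\<lambda>v. f v * g v - cg * f v - cf * g v + cf * cg)"
        by (auto simp: algebra_simps)
      then show ?thesis using fi gi fgi by (simp add: cf_def cg_def ps)
    qed
    then show ?thesis unfolding F_def using fi gi
      by (auto simp: cf_def cg_def ps)
  qed
  have term_int: "integrable (PiM {..<s} (\<lambda>_. M)) (\<lambda>V. (f (V l) - cf) * (g (V m) - cg))"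
    and term_val: "(\<integral>V. (f (V l) - cf) * (g (V m) - cg) \<partial>PiM {..<s} (\<lambda>_. M)) =
        (if l = m then (\<integral>v. f v * g v \<partial>M) - cf * cg else 0)"
    if "l < s" "m < s" for l m
  proof -
    have eq: "(\<lambda>V. (f (V l) - cf) * (g (V m) - cg)) = (\<lambda>V. \<Prod>i\<in>{..<s}. F l m i (V i))"
      using Fprod that by auto
    show "integrable (PiM {..<s} (\<lambda>_. M)) (\<lambda>V. (f (V l) - cf) * (g (V m) - cg))"
      unfolding eq by (intro product_integrable_prod Fint) auto
    have "(\<integral>V. (\<Prod>i\<in>{..<s}. F l m i (V i)) \<partial>PiM {..<s} (\<lambda>_. M)) = (\<Prod>i\<in>{..<s}. integral\<^sup>L M (F l m i))"
      by (intro product_integral_prod Fint) auto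
    also have "\<dots> = (if l = m then (\<integral>v. f v * g v \<partial>M) - cf * cg else 0)"
    proof (cases "l = m")
      case True
      then have "(\<Prod>i\<in>{..<s}. integral\<^sup>L M (F l m i)) = (\<Prod>i\<in>{..<s}. if i = m then (\<integral>v. f v * g v \<partial>M) - cf * cg else 1)"
        unfolding Fintg by (intro prod.cong) auto
      then show ?thesis using that True by (simp add: prod.delta)
    next
      case False
      have "(\<Prod>i\<in>{..<s}. integral\<^sup>L M (F l m i)) = 0"
        by (rule prod_zero) (use that False in \<open>auto simp: Fintg intro!: bexI[of _ l]\<close>)
      then show ?thesis using False by simp
    qed
    finally show "(\<integral>V. (f (V l) - cf) * (g (V m) - cg) \<partial>PiM {..<s} (\<lambda>_. M)) =
        (if l = m then (\<integral>v. f v * g v \<partial>M) - cf * cg else 0)" unfolding eq .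
  qed
  have expand: "((1/real s) * (\<Sum>l<s. f (V l) - cf)) * ((1/real s) * (\<Sum>m<s. g (V m) - cg))
     = (\<Sum>l<s. \<Sum>m<s. (1/real s)^2 * ((f (V l) - cf) * (g (V m) - cg)))" for V
  proof -
    have "((1/real s) * (\<Sum>l<s. f (V l) - cf)) * ((1/real s) * (\<Sum>m<s. g (V m) - cg))
       = (1/real s)^2 * ((\<Sum>l<s. f (V l) - cf) * (\<Sum>m<s. g (V m) - cg))"
      by (simp add: power2_eq_square)
    also have "\<dots> = (1/real s)^2 * (\<Sum>l<s. \<Sum>m<s. (f (V l) - cf) * (g (V m) - cg))"
      by (simp only: sum_product)
    finally show ?thesis by (simp only: sum_distrib_left)
  qed
  show "integrable (PiM {..<s} (\<lambda>_. M))
     (\<lambda>V. ((1/real s) * (\<Sum>l<s. f (V l) - integral\<^sup>L M f)) * ((1/real s) * (\<Sum>m<s. g (V m) - integral\<^sup>L M g)))"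
    unfolding cf_def[symmetric] cg_def[symmetric] expand
    apply (rule Bochner_Integration.integrable_sum)
    apply (rule Bochner_Integration.integrable_sum)
    apply (rule integrable_mult_right)
    apply (rule term_int)
    apply auto
    done
  have "(\<integral>V. ((1/real s) * (\<Sum>l<s. f (V l) - cf)) * ((1/real s) * (\<Sum>m<s. g (V m) - cg)) \<partial>PiM {..<s} (\<lambda>_. M))
     = (\<Sum>l<s. \<Sum>m<s. (1/real s)^2 * (if l = m then (\<integral>v. f v * g v \<partial>M) - cf * cg else 0))"
    unfolding expand
    apply (subst Bochner_Integration.integral_sum)
     apply (intro Bochner_Integration.integrable_sum integrable_mult_right; auto intro!: term_int)
    apply (intro sum.cong refl)
    apply (subst Bochner_Integration.integral_sum)
     apply (intro Bochner_Integration.integrable_sum integrable_mult_right; auto intro!: term_int)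
    apply (intro sum.cong refl)
    apply (subst integral_mult_right_zero)
    apply (subst term_val; simp)
    done
  also have "\<dots> = (1/real s) * ((\<integral>v. f v * g v \<partial>M) - cf * cg)"
  proof -
    have "(\<Sum>l<s. \<Sum>m<s. (1/real s)^2 * (if l = m then (\<integral>v. f v * g v \<partial>M) - cf * cg else 0))
       = (\<Sum>l<s. (1/real s)^2 * ((\<integral>v. f v * g v \<partial>M) - cf * cg))"
      by (intro sum.cong refl) (simp add: if_distrib[of "\<lambda>x. (1/real s)^2 * x"] sum.delta cong: if_cong)
    also have "\<dots> = (1/real s) * ((\<integral>v. f v * g v \<partial>M) - cf * cg)"
      using s by (simp add: power2_eq_square)
    finally show ?thesis .
  qed
  finally show "(\<integral>V. ((1/real s) * (\<Sum>l<s. f (V l) - integral\<^sup>L M f)) * ((1/real s) * (\<Sum>m<s. g (V m) - integral\<^sup>L M g))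
        \<partial>PiM {..<s} (\<lambda>_. M))
        = (1/real s) * ((\<integral>v. f v * g v \<partial>M) - integral\<^sup>L M f * integral\<^sup>L M g)"
    unfolding cf_def cg_def .
qed

lemma mm2: "\<bar>u::real\<bar> \<le> c \<Longrightarrow> \<bar>w\<bar> \<le> c \<Longrightarrow> \<bar>u * w\<bar> \<le> c * c"
  by (metis abs_mult abs_ge_zero order_trans mult_mono)

lemma abs_le_sqrt_of_sq: "(u::real)^2 \<le> b \<Longrightarrow> \<bar>u\<bar> \<le> sqrt b"
  using real_sqrt_le_mono[of "u^2" b] by simp

theorem lemma8:
  fixes \<kappa> :: "real^'d \<Rightarrow> real^'d \<Rightarrow> real"
    and \<psi> :: "real^'d \<Rightarrow> real^'d \<Rightarrow> real"
    and p :: "real^'d \<Rightarrow> real"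
    and b :: real and s :: nat
    and xs :: "'n::finite \<Rightarrow> real^'d" and x' :: "real^'d"
  assumes p_meas: "p \<in> borel_measurable lborel"
    and p_nonneg: "\<forall>v. 0 \<le> p v"
    and p_prob: "prob_space (density lborel (\<lambda>v. ennreal (p v)))"
    and psi_meas: "\<forall>x. \<psi> x \<in> borel_measurable lborel"
    and kernel: "\<forall>x y. \<kappa> x y = (\<integral>v. \<psi> x v * \<psi> y v * p v \<partial>lborel)"
    and b_pos: "b > 0"
    and bound: "\<forall>x. AE v in density lborel (\<lambda>v. ennreal (p v)). (\<psi> x v)\<^sup>2 \<le> b"
    and s_pos: "s > 0"
  shows "loewner_le
     (\<chi> i j. \<integral>V. outer (rf_kvec \<psi> s xs x' V - kvec \<kappa> xs x') (rf_kvec \<psi> s xs x' V - kvec \<kappa> xs x') $ i $ j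
              \<partial>(PiM {..<s} (\<lambda>_. density lborel (\<lambda>v. ennreal (p v)))))
     ((b / real s) *\<^sub>R gram_mat \<kappa> xs - (1 / real s) *\<^sub>R outer (kvec \<kappa> xs x') (kvec \<kappa> xs x'))"
proof -
  define M where "M = density lborel (\<lambda>v. ennreal (p v))"
  interpret prob_space M unfolding M_def by (rule p_prob)
  have meas[measurable]: "\<psi> x \<in> borel_measurable M" for x
    using psi_meas unfolding M_def by simp
  have bnd: "AE v in M. \<bar>\<psi> x v\<bar> \<le> sqrt b" for x
    using bound[rule_format, of x] unfolding M_def[symmetric]
    by (auto elim!: eventually_mono intro: abs_le_sqrt_of_sq)
  have sb: "sqrt b * sqrt b = b" using b_pos by simp
  have int2: "integrable M (\<lambda>v. \<psi> x v * \<psi> y v)" for x y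
  proof (rule integrable_const_bound[where B="sqrt b * sqrt b"])
    show "AE v in M. norm (\<psi> x v * \<psi> y v) \<le> sqrt b * sqrt b"
      using bnd[of x] bnd[of y]
      by eventually_elim (unfold real_norm_def, intro mm2, assumption+)
  qed simp
  have int4: "integrable M (\<lambda>v. (\<psi> x v * \<psi> y v) * (\<psi> z v * \<psi> w v))" for x y z w
  proof (rule integrable_const_bound[where B="(sqrt b * sqrt b) * (sqrt b * sqrt b)"])
    show "AE v in M. norm ((\<psi> x v * \<psi> y v) * (\<psi> z v * \<psi> w v)) \<le> (sqrt b * sqrt b) * (sqrt b * sqrt b)"
      using bnd[of x] bnd[of y] bnd[of z] bnd[of w]
      by eventually_elim (unfold real_norm_def, intro mm2, assumption+)
  qed simp
  have kern: "\<kappa> x y = (\<integral>v. \<psi> x v * \<psi> y v \<partial>M)" for x y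
  proof -
    have "(\<integral>v. \<psi> x v * \<psi> y v \<partial>M) = (\<integral>v. p v * (\<psi> x v * \<psi> y v) \<partial>lborel)"
      unfolding M_def using p_meas p_nonneg psi_meas[rule_format]
      by (intro integral_real_density borel_measurable_times) auto
    then show ?thesis using kernel by (simp add: ac_simps)
  qed
  define a where "a i v = \<psi> (xs i) v * \<psi> x' v" for i v
  define P where "P = PiM {..<s} (\<lambda>_. M)"
  have diff: "(rf_kvec \<psi> s xs x' V - kvec \<kappa> xs x') $ i
     = (1/real s) * (\<Sum>l<s. a i (V l) - integral\<^sup>L M (a i))" for V i
  proof -
    have "(rf_kvec \<psi> s xs x' V) $ i = (1/real s) * (\<Sum>l<s. a i (V l))"
      unfolding rf_kvec_def a_def using s_pos
      by (simp add: sum_distrib_left algebra_simps real_sqrt_mult[symmetric])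
    moreover have "(kvec \<kappa> xs x') $ i = integral\<^sup>L M (a i)"
      unfolding kvec_def a_def by (simp add: kern)
    ultimately show ?thesis using s_pos
      by (simp add: sum_subtractf algebra_simps)
  qed
  have Eij: "(\<integral>V. outer (rf_kvec \<psi> s xs x' V - kvec \<kappa> xs x') (rf_kvec \<psi> s xs x' V - kvec \<kappa> xs x') $ i $ j \<partial>P)
     = (1/real s) * ((\<integral>v. a i v * a j v \<partial>M) - integral\<^sup>L M (a i) * integral\<^sup>L M (a j))" for i j
  proof -
    have "(\<integral>V. outer (rf_kvec \<psi> s xs x' V - kvec \<kappa> xs x') (rf_kvec \<psi> s xs x' V - kvec \<kappa> xs x') $ i $ j \<partial>P)
       = (\<integral>V. ((1/real s) * (\<Sum>l<s. a i (V l) - integral\<^sup>L M (a i))) * ((1/real s) * (\<Sum>m<s. a j (V m) - integral\<^sup>L M (a j))) \<partial>P)"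
      unfolding outer_def diff by simp
    also have "\<dots> = (1/real s) * ((\<integral>v. a i v * a j v \<partial>M) - integral\<^sup>L M (a i) * integral\<^sup>L M (a j))"
      unfolding P_def
      by (rule mean_cov(2)[OF prob_space_axioms _ _ _ s_pos]) (auto simp: a_def int2 int4)
    finally show ?thesis .
  qed
  have kv: "(kvec \<kappa> xs x') $ i = integral\<^sup>L M (a i)" for i
    unfolding kvec_def a_def by (simp add: kern)
  define E where "E = (\<chi> i j. \<integral>V. outer (rf_kvec \<psi> s xs x' V - kvec \<kappa> xs x') (rf_kvec \<psi> s xs x' V - kvec \<kappa> xs x') $ i $ j \<partial>P)"
  define B where "B = (b / real s) *\<^sub>R gram_mat \<kappa> xs - (1 / real s) *\<^sub>R outer (kvec \<kappa> xs x') (kvec \<kappa> xs x')"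
  define G where "G i j v = b * (\<psi> (xs i) v * \<psi> (xs j) v) - a i v * a j v" for i j v
  have Gint: "integrable M (G i j)" for i j
    unfolding G_def a_def using int2 int4 by auto
  have Cij: "(B - E) $ i $ j = (1/real s) * integral\<^sup>L M (G i j)" for i j
  proof -
    have "integral\<^sup>L M (G i j) = b * (\<integral>v. \<psi> (xs i) v * \<psi> (xs j) v \<partial>M) - (\<integral>v. a i v * a j v \<partial>M)"
      unfolding G_def a_def using int2 int4 by simp
    then show ?thesis
      unfolding B_def E_def Eij
      using s_pos by (simp add: gram_mat_def outer_def kv kern field_simps)
  qed
  define h where "h z v = (\<Sum>i\<in>UNIV. z i * \<psi> (xs i) v)" for z :: "'n \<Rightarrow> real" and v
  have pw: "(\<Sum>i\<in>UNIV. \<Sum>j\<in>UNIV. z i * z j * G i j v) = (h z v)^2 * (b - (\<psi> x' v)^2)" for z v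
  proof -
    have "(h z v)^2 * (b - (\<psi> x' v)^2) = (\<Sum>i\<in>UNIV. \<Sum>j\<in>UNIV. (z i * \<psi> (xs i) v) * (z j * \<psi> (xs j) v)) * (b - (\<psi> x' v)^2)"
      unfolding h_def power2_eq_square[of "sum _ _"] by (simp only: sum_product)
    also have "\<dots> = (\<Sum>i\<in>UNIV. \<Sum>j\<in>UNIV. z i * z j * G i j v)"
      unfolding sum_distrib_right G_def a_def
      by (intro sum.cong refl) (simp add: power2_eq_square algebra_simps)
    finally show ?thesis by simp
  qed
  have "loewner_le E B"
    unfolding loewner_le_def
  proof
    fix z :: "real^'n"
    have "z \<bullet> ((B - E) *v z) = (\<Sum>i\<in>UNIV. \<Sum>j\<in>UNIV. (1/real s) * (z $ i * z $ j * integral\<^sup>L M (G i j)))"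
      unfolding inner_vec_def matrix_vector_mult_def Cij
      by (simp add: sum_distrib_left algebra_simps)
    also have "\<dots> = (1/real s) * (\<integral>v. (\<Sum>i\<in>UNIV. \<Sum>j\<in>UNIV. z $ i * z $ j * G i j v) \<partial>M)"
      using Gint
      by (simp add: Bochner_Integration.integral_sum Bochner_Integration.integrable_sum sum_distrib_left)
    also have "\<dots> = (1/real s) * (\<integral>v. (h (\<lambda>i. z $ i) v)^2 * (b - (\<psi> x' v)^2) \<partial>M)"
      using pw[of "\<lambda>i. z $ i"] by simp
    also have "\<dots> \<ge> 0"
    proof -
      have "AE v in M. 0 \<le> (h (\<lambda>i. z $ i) v)^2 * (b - (\<psi> x' v)^2)"
        using bound[rule_format, of x'] unfolding M_def[symmetric]
        by eventually_elim simp
      then show ?thesis using s_pos by (simp add: integral_nonneg_AE)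
    qed
    finally show "0 \<le> z \<bullet> ((B - E) *v z)" .
  qed
  then show ?thesis unfolding E_def B_def P_def M_def .
qed

end
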